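(* Let $\mathfrak{h}$ be a finite-dimensional Hilbert space and let $\mathcal{L}_t=\sum_{m\in\mathbb{Z}}\mathcal{L}_m e^{-\mathrm{i}m\omega t}$ be a $T$-periodic Lindbladian ($\omega=2\pi/T$) on operators on $\mathfrak{h}$, as described in the context. For every integer $N\ge0$, the truncated van Vleck effective Liouvillian $\mathcal{L}_\mathrm{eff}=\sum_{k=0}^{N}\mathcal{L}_\mathrm{eff}^{(k)}$ has at least one eigenvalue equal to zero.
   Context: The Lindbladian is $\mathcal{L}_t(\rho)=-\mathrm{i}[H(t),\rho]+\sum_\alpha\big[L_\alpha(t)\rho L_\alpha^\dagger(t)-\tfrac12\{L_\alpha^\dagger(t)L_\alpha(t),\rho\}\big]$, where $H(t)=H(t+T)$ is Hermitian and the (finitely many) jump operators satisfy $L_\alpha(t+T)=L_\alpha(t)$. Writing $H(t)=\sum_m H_m e^{-\mathrm{i}m\omega t}$ and $L_\alpha(t)=\sum_m L_{\alpha,m}e^{-\mathrm{i}m\omega t}$, the Fourier components are $\mathcal{L}_m=\mathcal{H}_m+\mathcal{D}_m$ with $\mathcal{H}_m(\rho)=-\mathrm{i}[H_m,\rho]$ and $\mathcal{D}_m(\rho)=\sum_{\alpha,n}\big[L_{\alpha,m-n}\rho L_{\alpha,n}^\dagger-\tfrac12\{L_{\alpha,n}^\dagger L_{\alpha,m-n},\rho\}\big]$ (all Fourier sums assumed convergent). The van Vleck high-frequency expansion is defined via the ansatz $\mathcal{V}(t,t')=e^{\mathcal{G}_t}e^{\mathcal{L}_\mathrm{eff}(t-t')}e^{-\mathcal{G}_{t'}}$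 for the propagator, with $\mathcal{G}_t$ periodic, $\mathcal{L}_\mathrm{eff}=\sum_{k\ge0}\mathcal{L}_\mathrm{eff}^{(k)}$, $\mathcal{L}_\mathrm{eff}^{(k)}=O(\omega^{-k})$; it is obtained from the isolated-system van Vleck expansion by the substitution $H_m\to\mathrm{i}\mathcal{L}_m$, $H_\mathrm{eff}\to\mathrm{i}\mathcal{L}_\mathrm{eff}$. Explicitly $\mathcal{L}_\mathrm{eff}^{(0)}=\mathcal{L}_0$, $\mathrm{i}\mathcal{L}_\mathrm{eff}^{(1)}=\sum_{m\ne0}\frac{[\mathrm{i}\mathcal{L}_{-m},\mathrm{i}\mathcal{L}_m]}{2m\omega}$, $\mathrm{i}\mathcal{L}_\mathrm{eff}^{(2)}=\sum_{m\ne0}\frac{[[\mathrm{i}\mathcal{L}_{-m},\mathrm{i}\mathcal{L}_0],\mathrm{i}\mathcal{L}_m]}{2m^2\omega^2}+\sum_{m\ne0}\sum_{n\ne0,m}\frac{[[\mathrm{i}\mathcal{L}_{-m},\mathrm{i}\mathcal{L}_{m-n}],\mathrm{i}\mathcal{L}_n]}{3mn\omega^2}$, and in general each $\mathcal{L}_\mathrm{eff}^{(k)}$ with $k\ge1$ is a linear combination (with complex coefficients) of nested commutators of the superoperators $\mathcal{L}_m$. $\mathcal{L}_\mathrm{eff}$ is regarded as a linear map on the space of operators on $\mathfrak{h}$. *)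

theory Defs
  imports "HOL-Analysis.Analysis"
begin

text \<open>Operators on a finite-dimensional Hilbert space \<open>\<h> = \<complex>^'n\<close> are complex
  matrices of type \<open>complex^'n^'n\<close>; superoperators are maps between them.\<close>

definition adj :: "complex^'n^'n \<Rightarrow> complex^'n^'n" where
  "adj M = (\<chi> i j. cnj (M $ j $ i))"

definition csc :: "complex \<Rightarrow> complex^'n^'n \<Rightarrow> complex^'n^'n" where
  "csc c M = (\<chi> i j. c * M $ i $ j)"

definition supcomm :: "('b \<Rightarrow> 'b::minus) \<Rightarrow> ('b \<Rightarrow> 'b) \<Rightarrow> 'b \<Rightarrow> 'b" where
  "supcomm A B = (\<lambda>x. A (B x) - B (A x))"

definition ham_comp :: "(int \<Rightarrow> complex^'n^'n) \<Rightarrow> int \<Rightarrow> complex^'n^'n \<Rightarrow> complex^'n^'n" where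
  "ham_comp H m \<rho> = csc (- \<i>) (H m ** \<rho> - \<rho> ** H m)"

definition diss_term :: "('j \<Rightarrow> int \<Rightarrow> complex^'n^'n) \<Rightarrow> 'j \<Rightarrow> int \<Rightarrow> complex^'n^'n \<Rightarrow> int \<Rightarrow> complex^'n^'n" where
  "diss_term L \<alpha> m \<rho> n =
     L \<alpha> (m - n) ** \<rho> ** adj (L \<alpha> n)
     - csc (1/2) (adj (L \<alpha> n) ** L \<alpha> (m - n) ** \<rho> + \<rho> ** (adj (L \<alpha> n) ** L \<alpha> (m - n)))"

definition diss_comp :: "('j::finite \<Rightarrow> int \<Rightarrow> complex^'n^'n) \<Rightarrow> int \<Rightarrow> complex^'n^'n \<Rightarrow> complex^'n^'n" where
  "diss_comp L m \<rho> = (\<Sum>\<alpha>\<in>UNIV. \<Sum>\<^sub>\<infinity>n. diss_term L \<alpha> m \<rho> n)"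

definition lind_comp :: "(int \<Rightarrow> complex^'n^'n) \<Rightarrow> ('j::finite \<Rightarrow> int \<Rightarrow> complex^'n^'n)
    \<Rightarrow> int \<Rightarrow> complex^'n^'n \<Rightarrow> complex^'n^'n" where
  "lind_comp H L m = (\<lambda>\<rho>. ham_comp H m \<rho> + diss_comp L m \<rho>)"

inductive nested_comm :: "(int \<Rightarrow> ('b \<Rightarrow> 'b::minus)) \<Rightarrow> ('b \<Rightarrow> 'b) \<Rightarrow> bool" for Lm where
  gen: "nested_comm Lm (Lm m)"
| br: "nested_comm Lm X \<Longrightarrow> nested_comm Lm Y \<Longrightarrow> nested_comm Lm (supcomm X Y)"

end

theory Submission
  imports Defs
begin


type_synonym 'n mt = "complex^'n^'n"

lemma sc: "(r::real) *\<^sub>R (z::complex) = of_real r * z"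
  by (simp add: scaleR_conv_of_real)

lemma csc_add: "csc c (A + B) = csc c A + csc c (B::('n::finite) mt)"
  by (simp add: csc_def vec_eq_iff algebra_simps)
lemma csc_diff: "csc c (A - B) = csc c A - csc c (B::('n::finite) mt)"
  by (simp add: csc_def vec_eq_iff algebra_simps)
lemma csc_scaleR: "csc c (r *\<^sub>R A) = r *\<^sub>R csc c (A::('n::finite) mt)"
  by (simp add: csc_def vec_eq_iff vector_scaleR_component sc algebra_simps)
lemma linear_csc: "linear (csc c ::('n::finite) mt \<Rightarrow> 'n mt)"
  by (rule linearI) (simp_all add: csc_add csc_scaleR)
lemma mm_scaleR_l: "(r *\<^sub>R (A::('n::finite) mt)) ** (B::('n::finite) mt) = r *\<^sub>R (A ** B)"
  by (simp add: vec_eq_iff matrix_matrix_mult_def vector_scaleR_component sc sum_distrib_left algebra_simps)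
lemma mm_scaleR_r: "(A::('n::finite) mt) ** (r *\<^sub>R (B::('n::finite) mt)) = r *\<^sub>R (A ** B)"
  by (simp add: vec_eq_iff matrix_matrix_mult_def vector_scaleR_component sc sum_distrib_left algebra_simps)
lemma matrix_add_rdistrib: "((A::('n::finite) mt) + B) ** C = A ** C + B ** C"
  by (simp add: vec_eq_iff matrix_matrix_mult_def sum.distrib distrib_right)

lemma trace_csc: "trace (csc c (A::('n::finite) mt)) = c * trace A"
  by (simp add: trace_def csc_def sum_distrib_left)
lemma trace_sum: "finite I \<Longrightarrow> trace (\<Sum>i\<in>I. (f i::('n::finite) mt)) = (\<Sum>i\<in>I. trace (f i))"
  unfolding trace_def sum_component by (rule sum.swap)


lemma trace_diss_term: "trace (diss_term L \<alpha> m \<rho> n) = 0"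
proof -
  define A where "A = L \<alpha> (m - n)"
  define B where "B = adj (L \<alpha> n)"
  have 1: "trace (A ** \<rho> ** B) = trace (B ** A ** \<rho>)"
    by (metis trace_mul_sym matrix_mul_assoc)
  have 2: "trace (\<rho> ** (B ** A)) = trace (B ** A ** \<rho>)"
    by (metis trace_mul_sym)
  show ?thesis unfolding diss_term_def A_def[symmetric] B_def[symmetric]
    by (simp add: trace_sub trace_csc trace_add 1 2)
qed


lemma linear_diss_term: "linear (\<lambda>\<rho>. diss_term L \<alpha> m \<rho> n)"
proof (rule linearI)
  fix x y
  show "diss_term L \<alpha> m (x + y) n = diss_term L \<alpha> m x n + diss_term L \<alpha> m y n"
    unfolding diss_term_def matrix_add_ldistrib matrix_add_rdistrib csc_add
    by (simp add: algebra_simps)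
next
  fix r x
  show "diss_term L \<alpha> m (r *\<^sub>R x) n = r *\<^sub>R diss_term L \<alpha> m x n"
    unfolding diss_term_def mm_scaleR_l mm_scaleR_r csc_scaleR
    by (simp add: scaleR_right_diff_distrib scaleR_right_distrib csc_add csc_scaleR)
qed

lemma linear_ham: "linear (ham_comp H m ::('n::finite) mt \<Rightarrow> 'n mt)"
proof (rule linearI)
  fix x y
  show "ham_comp H m (x + y) = ham_comp H m x + ham_comp H m y"
    unfolding ham_comp_def matrix_add_ldistrib matrix_add_rdistrib
    by (simp add: csc_add csc_diff algebra_simps)
next
  fix r x
  show "ham_comp H m (r *\<^sub>R x) = r *\<^sub>R ham_comp H m x"
    unfolding ham_comp_def mm_scaleR_l mm_scaleR_r
    by (simp add: scaleR_right_diff_distrib csc_diff csc_scaleR)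
qed
lemma bl_trace: "bounded_linear (trace ::('n::finite) mt \<Rightarrow> complex)"
  apply (rule linear_conv_bounded_linear[THEN iffD1])
  apply (rule linearI)
   apply (simp add: trace_add)
  apply (simp add: trace_def vector_scaleR_component sc sum_distrib_left)
  done

lemma linear_diss_comp: assumes "\<forall>\<alpha> m \<rho>. diss_term L \<alpha> m \<rho> summable_on UNIV"
  shows "linear (diss_comp L m)"
proof -
  have "linear (\<lambda>\<rho>. \<Sum>\<^sub>\<infinity>n. diss_term L \<alpha> m \<rho> n)" for \<alpha>
  proof (rule linearI)
    fix x y
    have "(\<Sum>\<^sub>\<infinity>n. diss_term L \<alpha> m (x + y) n) = (\<Sum>\<^sub>\<infinity>n. diss_term L \<alpha> m x n + diss_term L \<alpha> m y n)"
      by (rule arg_cong[where f="\<lambda>f. infsum f UNIV"], rule ext, rule linear_add[OF linear_diss_term])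
    also have "\<dots> = (\<Sum>\<^sub>\<infinity>n. diss_term L \<alpha> m x n) + (\<Sum>\<^sub>\<infinity>n. diss_term L \<alpha> m y n)"
      using assms by (intro infsum_add) auto
    finally show "(\<Sum>\<^sub>\<infinity>n. diss_term L \<alpha> m (x + y) n) = (\<Sum>\<^sub>\<infinity>n. diss_term L \<alpha> m x n) + (\<Sum>\<^sub>\<infinity>n. diss_term L \<alpha> m y n)" .
  next
    fix r x
    show "(\<Sum>\<^sub>\<infinity>n. diss_term L \<alpha> m (r *\<^sub>R x) n) = r *\<^sub>R (\<Sum>\<^sub>\<infinity>n. diss_term L \<alpha> m x n)"
      unfolding linear_scale[OF linear_diss_term] by (rule infsum_scaleR_right)
  qed
  then show ?thesis unfolding diss_comp_def[abs_def]
    by (intro linear_compose_sum) blast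
qed

lemma trace_diss_comp: assumes "\<forall>\<alpha> m \<rho>. diss_term L \<alpha> m \<rho> summable_on UNIV"
  shows "trace (diss_comp L m \<rho>) = 0"
proof -
  have "trace (\<Sum>\<^sub>\<infinity>n. diss_term L \<alpha> m \<rho> n) = 0" for \<alpha>
  proof -
    have "((\<lambda>n. trace (diss_term L \<alpha> m \<rho> n)) has_sum trace (\<Sum>\<^sub>\<infinity>n. diss_term L \<alpha> m \<rho> n)) UNIV"
      using has_sum_bounded_linear[OF bl_trace has_sum_infsum, of "diss_term L \<alpha> m \<rho>" UNIV] assms by blast
    then show ?thesis by (simp add: trace_diss_term has_sum_0 has_sum_unique)
  qed
  then show ?thesis unfolding diss_comp_def by (simp add: trace_sum)
qed

lemma trace_ham: "trace (ham_comp H m \<rho>) = 0"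
  unfolding ham_comp_def trace_csc trace_sub trace_mul_sym[of "H m" \<rho>] by simp

lemma nc_props:
  assumes "\<forall>\<alpha> m \<rho>. diss_term L \<alpha> m \<rho> summable_on UNIV"
    and "nested_comm (lind_comp H L) X"
  shows "linear X \<and> (\<forall>\<rho>. trace (X \<rho>) = 0)"
  using assms(2)
proof induction
  case (gen m)
  have "linear (lind_comp H L m)" unfolding lind_comp_def
    by (rule linear_compose_add[OF linear_ham linear_diss_comp[OF assms(1)]])
  moreover have "trace (lind_comp H L m \<rho>) = 0" for \<rho>
    unfolding lind_comp_def trace_add trace_ham trace_diss_comp[OF assms(1)] by simp
  ultimately show ?case by blast
next
  case (br X Y)
  have "linear (\<lambda>x. X (Y x))" using linear_compose[of Y X] br by (simp add: o_def)
  moreover have "linear (\<lambda>x. Y (X x))" using linear_compose[of X Y] br by (simp add: o_def)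
  ultimately have "linear (supcomm X Y)" unfolding supcomm_def by (rule linear_compose_sub)
  moreover have "trace (supcomm X Y \<rho>) = 0" for \<rho>
    unfolding supcomm_def trace_sub using br by simp
  ultimately show ?case by blast
qed

theorem theorem1:
  fixes \<omega> :: real
    and H :: "int \<Rightarrow> complex^'n^'n"
    and L :: "'j::finite \<Rightarrow> int \<Rightarrow> complex^'n^'n"
    and Leff :: "complex^'n^'n \<Rightarrow> complex^'n^'n"
    and I :: "nat set" and c :: "nat \<Rightarrow> complex"
    and Y Z :: "nat \<Rightarrow> complex^'n^'n \<Rightarrow> complex^'n^'n"
  assumes omega_pos: "\<omega> > 0"
    and H_conv: "H summable_on UNIV"
    and H_herm: "\<forall>t::real. adj (\<Sum>\<^sub>\<infinity>m. csc (exp (- \<i> * of_int m * of_real (\<omega> * t))) (H m))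
                              = (\<Sum>\<^sub>\<infinity>m. csc (exp (- \<i> * of_int m * of_real (\<omega> * t))) (H m))"
    and L_conv: "\<forall>\<alpha>. L \<alpha> summable_on UNIV"
    and D_conv: "\<forall>\<alpha> m \<rho>. diss_term L \<alpha> m \<rho> summable_on UNIV"
    and I_fin: "finite I"
    and Y_nc: "\<forall>i\<in>I. nested_comm (lind_comp H L) (Y i)"
    and Z_nc: "\<forall>i\<in>I. nested_comm (lind_comp H L) (Z i)"
    and Leff_def: "Leff = (\<lambda>\<rho>. lind_comp H L 0 \<rho> + (\<Sum>i\<in>I. csc (c i) (supcomm (Y i) (Z i) \<rho>)))"
  shows "\<exists>\<rho>. \<rho> \<noteq> 0 \<and> Leff \<rho> = 0"
  proof -
  have lc: "nested_comm (lind_comp H L) X \<Longrightarrow> linear X \<and> (\<forall>\<rho>. trace (X \<rho>) = 0)" for X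
    using nc_props D_conv by blast
  have L0: "linear (lind_comp H L 0)" "\<And>\<rho>. trace (lind_comp H L 0 \<rho>) = 0"
    using lc[OF nested_comm.gen[of _ 0]] by auto
  have S: "linear (supcomm (Y i) (Z i))" "\<And>\<rho>. trace (supcomm (Y i) (Z i) \<rho>) = 0" if "i \<in> I" for i
    using lc[OF nested_comm.br] Y_nc Z_nc that by auto
  have lin: "linear Leff"
    unfolding Leff_def
    apply (rule linear_compose_add[OF L0(1)])
    apply (rule linear_compose_sum[unfolded o_def])
    using S(1) linear_compose[OF _ linear_csc, unfolded o_def] by auto
  have tr: "trace (Leff \<rho>) = 0" for \<rho>
    unfolding Leff_def using I_fin S(2) by (simp add: trace_add L0(2) trace_sum trace_csc)
  have "\<not> surj Leff"
  proof
    assume "surj Leff"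
    then obtain x where "Leff x = mat 1" by (metis surjE)
    then have "trace (mat 1 :: complex^'n^'n) = 0" using tr by metis
    then show False by (simp add: trace_I)
  qed
  then have "\<not> inj Leff" using lin linear_injective_imp_surjective by blast
  then obtain x y where "x \<noteq> y" "Leff x = Leff y" unfolding inj_def by blast
  then show ?thesis using linear_diff[OF lin, of x y] by (intro exI[of _ "x - y"]) auto
qed

end
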